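(* The structure $\mathbb{Q}_2$ is an extension of $\mathbf{S}(2)$; that is, $p(\mathbb{Q}_2)$ is isomorphic to $\mathbf{S}(2)$.
   Context: $\mathbf{S}(2)$ is the tournament whose vertices are the points of the unit circle of $\mathbb{C}$ with rational argument, with an arc from $x$ to $y$ iff $0<\arg(y/x)<\pi$. $\mathbb{Q}_2=(\mathbb{Q},<,Q_1,Q_2)$ where $<$ is the usual order of the rationals and $(Q_1,Q_2)$ is a partition of $\mathbb{Q}$ into two dense subsets. For a structure $\mathbf{A}=(A,<^{\mathbf{A}},P_1,P_2)$ with $<^{\mathbf{A}}$ a linear order and $(P_1,P_2)$ a partition of $A$, writing $a\sim b$ when $a,b$ lie in the same part, $p(\mathbf{A})$ is the tournament on $A$ with an arc from $a$ to $b$ iff either ($a\sim b$ and $a<^{\mathbf{A}}b$) or ($a\not\sim b$ and $b<^{\mathbf{A}}a$). An extension of a tournament $\mathbf{X}$ is any such $\mathbf{A}$ with $p(\mathbf{A})=\mathbf{X}$ (up to isomorphism). *)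

theory Defs
  imports "HOL-Analysis.Analysis"
begin

definition S2_vertices :: "complex set" where
  "S2_vertices = {z. cmod z = 1 \<and> Arg z \<in> \<rat>}"

definition S2_arc :: "complex \<Rightarrow> complex \<Rightarrow> bool" where
  "S2_arc x y \<longleftrightarrow> 0 < Arg (y / x) \<and> Arg (y / x) < pi"

definition dense_in_rat :: "rat set \<Rightarrow> bool" where
  "dense_in_rat Q \<longleftrightarrow> (\<forall>a b. a < b \<longrightarrow> (\<exists>q\<in>Q. a < q \<and> q < b))"

definition p_arc :: "('a \<Rightarrow> 'a \<Rightarrow> bool) \<Rightarrow> 'a set \<Rightarrow> 'a set \<Rightarrow> 'a \<Rightarrow> 'a \<Rightarrow> bool" where
  "p_arc lt P1 P2 a b \<longleftrightarrow>
     (let same = ((a \<in> P1 \<and> b \<in> P1) \<or> (a \<in> P2 \<and> b \<in> P2))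
      in (same \<and> lt a b) \<or> (\<not> same \<and> lt b a))"

definition digraph_iso :: "'a set \<Rightarrow> ('a \<Rightarrow> 'a \<Rightarrow> bool) \<Rightarrow> 'b set \<Rightarrow> ('b \<Rightarrow> 'b \<Rightarrow> bool) \<Rightarrow> ('a \<Rightarrow> 'b) \<Rightarrow> bool" where
  "digraph_iso A R B S f \<longleftrightarrow> bij_betw f A B \<and> (\<forall>a\<in>A. \<forall>b\<in>A. R a b \<longleftrightarrow> S (f a) (f b))"

end

theory Submission
  imports Defs "HOL-Computational_Algebra.Polynomial"
begin


lemma int_coeffs_mult:
  assumes "\<forall>i. coeff p i \<in> \<int>" "\<forall>i. coeff q i \<in> \<int>"
  shows "\<forall>i. coeff (p * q :: real poly) i \<in> \<int>"
  using assms by (auto simp: coeff_mult intro!: Ints_sum Ints_mult)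

lemma int_coeffs_pow:
  assumes "\<forall>i. coeff p i \<in> \<int>"
  shows "\<forall>i. coeff (p ^ n :: real poly) i \<in> \<int>"
proof (induction n)
  case 0 show ?case by (auto simp: coeff_1)
next
  case (Suc n) then show ?case using int_coeffs_mult[OF assms] by simp
qed

lemma xpow_monom: "([:0,1:] :: 'a::comm_semiring_1 poly) ^ n = monom 1 n"
  by (simp add: monom_altdef)

lemma deriv0_int:
  fixes R :: "real poly"
  assumes "\<forall>i. coeff R i \<in> \<int>"
  shows "poly ((pderiv ^^ k) ([:0,1:]^n * R)) 0 / fact n \<in> \<int>"
proof -
  have e: "poly ((pderiv ^^ k) ([:0,1:]^n * R)) 0 = fact k * (if k < n then 0 else coeff R (k - n))"
    by (simp add: poly_0_coeff_0 coeff_higher_pderiv xpow_monom coeff_monom_mult pochhammer_fact)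
  show ?thesis
  proof (cases "k < n")
    case True then show ?thesis by (simp add: e)
  next
    case False
    have "fact n dvd (fact k :: nat)" using False by (simp add: fact_dvd)
    then have "(fact k :: real) / fact n = real (fact k div fact n)"
      by (simp add: real_of_nat_div)
    then have "(fact k :: real) / fact n \<in> \<int>" by simp
    then show ?thesis using False assms
      by (simp add: e) (metis Ints_mult times_divide_eq_left mult.commute)
  qed
qed

lemma int_coeffs_lin:
  fixes a b :: int
  shows "\<forall>i. coeff [:of_int a, of_int b:] i \<in> (\<int> :: real set)"
proof
  fix i show "coeff [:of_int a, of_int b:] i \<in> (\<int> :: real set)"
    by (cases i; cases "i - 1") (auto simp: coeff_pCons)
qed

lemma higher_pderiv_shift:
  "(pderiv ^^ k) (pcompose p [:c, 1:]) = pcompose ((pderiv ^^ k) p) [:(c::real), 1:]"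
  by (induction k) (auto simp: pderiv_pcompose pderiv_pCons)

lemma telescope:
  fixes p :: "real poly"
  shows "(\<Sum>j\<le>m. smult ((-1)^j) ((pderiv ^^ (2*j+2)) p)) + (\<Sum>j\<le>m. smult ((-1)^j) ((pderiv ^^ (2*j)) p))
     = p + smult ((-1)^m) ((pderiv ^^ (2*m+2)) p)"
proof (induction m)
  case 0 then show ?case by simp
next
  case (Suc m)
  have e: "2 * Suc m = 2*m+2" by simp
  show ?case using Suc by (simp add: e algebra_simps)
qed

lemma high_deriv_zero:
  fixes p :: "real poly"
  assumes "degree p < k"
  shows "(pderiv ^^ k) p = 0"
  by (rule poly_eqI) (use assms in \<open>simp add: coeff_higher_pderiv coeff_eq_0\<close>)

lemma pi_not_rat: "pi \<notin> \<rat>"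
proof
  assume "pi \<in> \<rat>"
  then obtain a b :: int where b: "b > 0" and ab: "pi = of_int a / of_int b"
    by (auto elim: Rats_cases')
  have api: "real_of_int a = of_int b * pi" using ab b by (simp add: field_simps)
  have apos: "real_of_int a > 0" using api b pi_gt_zero by simp
  define c where "c = pi * of_int a"
  have "(\<lambda>n. inverse (fact n) * c ^ n) \<longlonglongrightarrow> 0"
    by (rule summable_LIMSEQ_zero[OF summable_exp])
  then have "eventually (\<lambda>n. inverse (fact n) * c ^ n < 1 / pi) sequentially"
    by (rule order_tendstoD) simp
  then obtain n where nbig: "inverse (fact n) * c ^ n < 1 / pi"
    by (auto simp: eventually_sequentially)
  define P :: "real poly" where "P = [:0,1:]^n * [:of_int a, of_int (-b):]^n"
  define FP where "FP = (\<Sum>j\<le>n. smult ((-1)^j) ((pderiv ^^ (2*j)) P))"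
  have degP: "degree P \<le> 2*n"
  proof -
    have "degree P \<le> degree ([:0,1:]^n :: real poly) + degree ([:of_int a, of_int (-b):]^n :: real poly)"
      unfolding P_def by (rule degree_mult_le)
    also have "\<dots> \<le> 1 * n + 1 * n"
      by (intro add_mono order.trans[OF degree_power_le]) auto
    finally show ?thesis by simp
  qed
  have "(pderiv ^^ 2) FP = (\<Sum>j\<le>n. smult ((-1)^j) ((pderiv ^^ (2*j+2)) P))"
    unfolding FP_def higher_pderiv_sum higher_pderiv_smult
    by (simp add: numeral_2_eq_2)
  then have "(pderiv ^^ 2) FP + FP = P + smult ((-1)^n) ((pderiv ^^ (2*n+2)) P)"
    using telescope[of P n] unfolding FP_def by simp
  also have "(pderiv ^^ (2*n+2)) P = 0" by (rule high_deriv_zero) (use degP in simp)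
  finally have ode: "pderiv (pderiv FP) + FP = P" by (simp add: numeral_2_eq_2)
  have int0: "\<forall>i. coeff ([:of_int a, of_int (-b):]^n) i \<in> (\<int>::real set)"
    by (rule int_coeffs_pow[OF int_coeffs_lin])
  have int1: "\<forall>i. coeff ([:of_int a, of_int b:]^n) i \<in> (\<int>::real set)"
    by (rule int_coeffs_pow[OF int_coeffs_lin])
  have shift: "pcompose P [:pi, 1:] = smult ((-1)^n) ([:0,1:]^n * [:of_int a, of_int b:]^n)"
  proof (rule poly_eq_poly_eq_iff[THEN iffD1], rule ext)
    fix t
    have "poly (pcompose P [:pi, 1:]) t = (pi + t)^n * (of_int a - of_int b * (pi + t))^n"
      by (simp add: P_def poly_pcompose mult.commute)
    also have "of_int a - of_int b * (pi + t) = (-1) * (of_int b * t)" using api by (simp add: algebra_simps)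
    also have "(pi + t)^n * ((-1) * (of_int b * t))^n = (-1)^n * (t^n * (of_int a + of_int b * t)^n)"
    proof -
      have e1: "of_int a + of_int b * t = (pi + t) * of_int b" using api by (simp add: algebra_simps)
      have e2: "(-1) * (of_int b * t) = (-1) * t * (of_int b :: real)" by simp
      show ?thesis unfolding e1 e2 power_mult_distrib by (simp only: mult_ac)
    qed
    finally show "poly (pcompose P [:pi, 1:]) t = poly (smult ((-1)^n) ([:0,1:]^n * [:of_int a, of_int b:]^n)) t"
      by (simp add: mult.commute)
  qed
  have d0: "poly ((pderiv ^^ k) P) 0 / fact n \<in> \<int>" for k
    unfolding P_def by (rule deriv0_int[OF int0])
  have dpi: "poly ((pderiv ^^ k) P) pi / fact n \<in> \<int>" for k
  proof -
    have "poly ((pderiv ^^ k) P) pi = poly ((pderiv ^^ k) (pcompose P [:pi, 1:])) 0"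
      by (simp add: higher_pderiv_shift poly_pcompose)
    also have "\<dots> = (-1)^n * poly ((pderiv ^^ k) ([:0,1:]^n * [:of_int a, of_int b:]^n)) 0"
      by (simp add: shift higher_pderiv_smult)
    finally show ?thesis using deriv0_int[OF int1, of k n]
      by (metis Ints_1 Ints_minus Ints_mult Ints_power times_divide_eq_right)
  qed
  have FPint: "(poly FP pi + poly FP 0) / fact n \<in> \<int>"
  proof -
    have "(poly FP pi + poly FP 0) / fact n = (\<Sum>j\<le>n. (-1)^j * (poly ((pderiv ^^ (2*j)) P) pi / fact n))
       + (\<Sum>j\<le>n. (-1)^j * (poly ((pderiv ^^ (2*j)) P) 0 / fact n))"
      by (simp add: FP_def poly_sum add_divide_distrib sum_divide_distrib)
    also have "\<dots> \<in> \<int>" using d0 dpi by (intro Ints_add Ints_sum Ints_mult) auto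
    finally show ?thesis .
  qed
  define G where "G x = poly (pderiv FP) x * sin x - poly FP x * cos x" for x
  have "DERIV G x :> poly P x * sin x" for x
  proof -
    have D: "DERIV G x :> (poly (pderiv (pderiv FP)) x * sin x + poly (pderiv FP) x * cos x)
         - (poly (pderiv FP) x * cos x + poly FP x * (- sin x))"
      unfolding G_def by (auto intro!: derivative_eq_intros)
    have "(poly (pderiv (pderiv FP)) x * sin x + poly (pderiv FP) x * cos x)
         - (poly (pderiv FP) x * cos x + poly FP x * (- sin x)) = (poly (pderiv (pderiv FP)) x + poly FP x) * sin x" by (simp add: algebra_simps)
    also have "poly (pderiv (pderiv FP)) x + poly FP x = poly P x"
      using ode by (metis poly_add)
    finally have "(poly (pderiv (pderiv FP)) x * sin x + poly (pderiv FP) x * cos x)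
         - (poly (pderiv FP) x * cos x + poly FP x * (- sin x)) = poly P x * sin x" .
    with D show ?thesis by simp
  qed
  then obtain z where z: "0 < z" "z < pi" and mvt: "G pi - G 0 = (pi - 0) * (poly P z * sin z)"
    using MVT2[of 0 pi G "\<lambda>x. poly P x * sin x"] by auto
  have Gd: "G pi - G 0 = poly FP pi + poly FP 0" by (simp add: G_def)
  have Pz: "poly P z = z^n * (of_int a - of_int b * z)^n" by (simp add: P_def mult.commute)
  have l1: "0 < of_int a - of_int b * z" using api z b by simp
  have l2: "of_int a - of_int b * z \<le> of_int a" using z b by simp
  have Ppos: "poly P z > 0" using Pz l1 z by simp
  have Ple: "poly P z \<le> pi^n * of_int a ^n"
    unfolding Pz by (intro mult_mono power_mono) (use z l1 l2 in auto)
  have sinz: "0 < sin z" "sin z \<le> 1" using z by (auto simp: sin_gt_zero)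
  have pos: "0 < (poly FP pi + poly FP 0) / fact n"
    using mvt Gd Ppos sinz by simp
  have "(poly FP pi + poly FP 0) / fact n = pi * (poly P z * sin z) / fact n" using mvt Gd by simp
  also have "\<dots> \<le> pi * (pi^n * of_int a ^n) / fact n"
    using Ple sinz Ppos by (intro divide_right_mono mult_left_mono) (auto intro: mult_le_one order.trans[OF mult_right_le_one_le])
  also have "\<dots> = pi * (inverse (fact n) * c ^ n)" by (simp add: c_def power_mult_distrib field_simps)
  also have "\<dots> < pi * (1 / pi)" using nbig by (intro mult_strict_left_mono) auto
  also have "\<dots> = 1" by simp
  finally have lt1: "(poly FP pi + poly FP 0) / fact n < 1" .
  from FPint obtain m where "(poly FP pi + poly FP 0) / fact n = of_int m" by (auto elim: Ints_cases)
  with pos lt1 show False by simp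
qed



definition EP :: "'b::linorder set \<Rightarrow> ('b \<Rightarrow> bool) \<Rightarrow> bool" where
  "EP Y d \<longleftrightarrow> (\<forall>S T col. finite S \<longrightarrow> finite T \<longrightarrow> S \<subseteq> Y \<longrightarrow> T \<subseteq> Y \<longrightarrow> (\<forall>s\<in>S. \<forall>t\<in>T. s < t) \<longrightarrow>
      (\<exists>y\<in>Y. d y = col \<and> (\<forall>s\<in>S. s < y) \<and> (\<forall>t\<in>T. y < t)))"

lemma EPD:
  assumes "EP Y d" "finite S" "finite T" "S \<subseteq> Y" "T \<subseteq> Y" "\<forall>s\<in>S. \<forall>t\<in>T. s < t"
  shows "\<exists>y\<in>Y. d y = col \<and> (\<forall>s\<in>S. s < y) \<and> (\<forall>t\<in>T. y < t)"
  using assms unfolding EP_def by simp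

definition piso :: "('a::linorder \<Rightarrow> bool) \<Rightarrow> ('b::linorder \<Rightarrow> bool) \<Rightarrow> ('a \<times> 'b) set \<Rightarrow> bool" where
  "piso c d R \<longleftrightarrow> (\<forall>a b a' b'. (a,b)\<in>R \<longrightarrow> (a',b')\<in>R \<longrightarrow> (a < a' \<longleftrightarrow> b < b') \<and> (c a \<longleftrightarrow> d b))"

lemma piso_conv: "piso c d R \<longleftrightarrow> piso d c (R\<inverse>)"
  unfolding piso_def by blast

lemma piso_ext:
  assumes "finite R" "piso c d R" "R \<subseteq> X \<times> Y" "EP Y d" "x \<in> X"
  shows "\<exists>y\<in>Y. piso c d (insert (x,y) R)"
proof (cases "\<exists>b. (x,b) \<in> R")
  case True
  then obtain b where b: "(x,b) \<in> R" by blast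
  then have "b \<in> Y" using assms(3) by auto
  moreover have "piso c d (insert (x,b) R)"
    unfolding piso_def
  proof (intro allI impI)
    fix a1 b1 a2 b2 assume 1: "(a1,b1) \<in> insert (x,b) R" and 2: "(a2,b2) \<in> insert (x,b) R"
    then have "(a1,b1) \<in> R" "(a2,b2) \<in> R" using b by auto
    then show "(a1 < a2 \<longleftrightarrow> b1 < b2) \<and> (c a1 \<longleftrightarrow> d b1)" using assms(2) unfolding piso_def by blast
  qed
  ultimately show ?thesis by blast
next
  case False
  define S where "S = {b. \<exists>a. (a,b) \<in> R \<and> a < x}"
  define T where "T = {b. \<exists>a. (a,b) \<in> R \<and> x < a}"
  have "S \<subseteq> snd ` R" unfolding S_def by (auto intro: rev_image_eqI)
  then have fS: "finite S" using assms(1) finite_subset by blast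
  have "T \<subseteq> snd ` R" unfolding T_def by (auto intro: rev_image_eqI)
  then have fT: "finite T" using assms(1) finite_subset by blast
  have ST: "\<forall>s\<in>S. \<forall>t\<in>T. s < t"
  proof (intro ballI)
    fix s t assume "s \<in> S" "t \<in> T"
    then obtain a a' where "(a,s) \<in> R" "a < x" "(a',t) \<in> R" "x < a'" unfolding S_def T_def by blast
    then show "s < t" using assms(2) unfolding piso_def by (meson order.strict_trans)
  qed
  have "S \<subseteq> Y" "T \<subseteq> Y" using assms(3) unfolding S_def T_def by auto
  then obtain y where y: "y \<in> Y" "d y = c x" "\<forall>s\<in>S. s < y" "\<forall>t\<in>T. y < t"
    using EPD[OF assms(4) fS fT _ _ ST, of "c x"] by blast
  have key: "(a < x \<longleftrightarrow> b < y) \<and> (x < a \<longleftrightarrow> y < b)" if "(a,b) \<in> R" for a b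
  proof -
    have "a \<noteq> x" using False that by blast
    then have "a < x \<or> x < a" by auto
    moreover have "a < x \<Longrightarrow> b < y" using y(3) that unfolding S_def by blast
    moreover have "x < a \<Longrightarrow> y < b" using y(4) that unfolding T_def by blast
    ultimately show ?thesis by auto
  qed
  have "piso c d (insert (x,y) R)"
    unfolding piso_def
  proof (intro allI impI)
    fix a1 b1 a2 b2 assume 1: "(a1,b1) \<in> insert (x,y) R" and 2: "(a2,b2) \<in> insert (x,y) R"
    show "(a1 < a2 \<longleftrightarrow> b1 < b2) \<and> (c a1 \<longleftrightarrow> d b1)"
    proof (cases "(a1,b1) = (x,y)")
      case True
      then show ?thesis
      proof (cases "(a2,b2) = (x,y)")
        case False then have "(a2,b2) \<in> R" using 2 by auto
        then show ?thesis using key[of a2 b2] True y(2) by auto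
      qed (use y(2) in auto)
    next
      case F1: False then have r1: "(a1,b1) \<in> R" using 1 by auto
      show ?thesis
      proof (cases "(a2,b2) = (x,y)")
        case True then show ?thesis using key[OF r1] assms(2) r1 unfolding piso_def by auto
      next
        case False then have "(a2,b2) \<in> R" using 2 by auto
        then show ?thesis using r1 assms(2) unfolding piso_def by blast
      qed
    qed
  qed
  with y show ?thesis by blast
qed

lemma piso_ext2:
  assumes "finite R" "piso c d R" "R \<subseteq> X \<times> Y" "EP X c" "y \<in> Y"
  shows "\<exists>x\<in>X. piso c d (insert (x,y) R)"
proof -
  have "finite (R\<inverse>)" "piso d c (R\<inverse>)" "R\<inverse> \<subseteq> Y \<times> X"
    using assms piso_conv by auto
  from piso_ext[OF this assms(4,5)] obtain x where "x \<in> X" "piso d c (insert (y,x) (R\<inverse>))" by blast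
  moreover have "insert (y,x) (R\<inverse>) = (insert (x,y) R)\<inverse>" by auto
  ultimately show ?thesis using piso_conv by metis
qed

definition bfstep :: "'a::linorder set \<Rightarrow> 'b::linorder set \<Rightarrow> ('a \<Rightarrow> bool) \<Rightarrow> ('b \<Rightarrow> bool) \<Rightarrow> nat \<Rightarrow> ('a \<times> 'b) set \<Rightarrow> ('a \<times> 'b) set" where
  "bfstep X Y c d n R =
    (let R1 = insert (from_nat_into X n, SOME y. y \<in> Y \<and> piso c d (insert (from_nat_into X n, y) R)) R
     in insert (SOME x. x \<in> X \<and> piso c d (insert (x, from_nat_into Y n) R1), from_nat_into Y n) R1)"

lemma bfstep_props:
  assumes "EP X c" "EP Y d" "X \<noteq> {}" "Y \<noteq> {}"
    and R: "finite R" "piso c d R" "R \<subseteq> X \<times> Y"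
  shows "finite (bfstep X Y c d n R) \<and> piso c d (bfstep X Y c d n R) \<and> bfstep X Y c d n R \<subseteq> X \<times> Y
    \<and> R \<subseteq> bfstep X Y c d n R \<and> (\<exists>y. (from_nat_into X n, y) \<in> bfstep X Y c d n R)
    \<and> (\<exists>x. (x, from_nat_into Y n) \<in> bfstep X Y c d n R)"
proof -
  define xn where "xn = from_nat_into X n"
  define yn where "yn = from_nat_into Y n"
  have xn: "xn \<in> X" "yn \<in> Y" using assms(3,4) by (auto simp: xn_def yn_def from_nat_into)
  define y where "y = (SOME y. y \<in> Y \<and> piso c d (insert (xn, y) R))"
  have "\<exists>y. y \<in> Y \<and> piso c d (insert (xn, y) R)" using piso_ext[OF R assms(2) xn(1)] by blast
  then have "y \<in> Y \<and> piso c d (insert (xn, y) R)" unfolding y_def by (rule someI_ex)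
  then have y: "y \<in> Y" "piso c d (insert (xn, y) R)" by auto
  define R1 where "R1 = insert (xn, y) R"
  have R1: "finite R1" "piso c d R1" "R1 \<subseteq> X \<times> Y" using R y xn unfolding R1_def by auto
  define x where "x = (SOME x. x \<in> X \<and> piso c d (insert (x, yn) R1))"
  have "\<exists>x. x \<in> X \<and> piso c d (insert (x, yn) R1)" using piso_ext2[OF R1 assms(1) xn(2)] by blast
  then have "x \<in> X \<and> piso c d (insert (x, yn) R1)" unfolding x_def by (rule someI_ex)
  then have x: "x \<in> X" "piso c d (insert (x, yn) R1)" by auto
  have eq: "bfstep X Y c d n R = insert (x, yn) R1"
    unfolding bfstep_def Let_def x_def y_def R1_def xn_def yn_def ..
  have m1: "(from_nat_into X n, y) \<in> bfstep X Y c d n R" unfolding eq R1_def xn_def by simp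
  have m2: "(x, from_nat_into Y n) \<in> bfstep X Y c d n R" unfolding eq yn_def by simp
  have m3: "finite (bfstep X Y c d n R) \<and> piso c d (bfstep X Y c d n R) \<and> bfstep X Y c d n R \<subseteq> X \<times> Y
    \<and> R \<subseteq> bfstep X Y c d n R" unfolding eq using R1 x xn unfolding R1_def by auto
  from m1 m2 m3 show ?thesis by blast
qed

primrec bfseq :: "'a::linorder set \<Rightarrow> 'b::linorder set \<Rightarrow> ('a \<Rightarrow> bool) \<Rightarrow> ('b \<Rightarrow> bool) \<Rightarrow> nat \<Rightarrow> ('a \<times> 'b) set" where
  "bfseq X Y c d 0 = {}"
| "bfseq X Y c d (Suc n) = bfstep X Y c d n (bfseq X Y c d n)"

lemma bfseq_inv:
  assumes "EP X c" "EP Y d" "X \<noteq> {}" "Y \<noteq> {}"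
  shows "finite (bfseq X Y c d n) \<and> piso c d (bfseq X Y c d n) \<and> bfseq X Y c d n \<subseteq> X \<times> Y"
proof (induction n)
  case 0
  show ?case by (simp add: piso_def)
next
  case (Suc n) then show ?case using bfstep_props[OF assms] by simp
qed

lemma back_forth:
  fixes X :: "'a::linorder set" and Y :: "'b::linorder set"
  assumes cX: "countable X" and cY: "countable Y" and eX: "EP X c" and eY: "EP Y d"
  shows "\<exists>h. bij_betw h X Y \<and> (\<forall>a\<in>X. \<forall>b\<in>X. a < b \<longleftrightarrow> h a < h b) \<and> (\<forall>a\<in>X. c a = d (h a))"
proof -
  have "\<exists>y\<in>X. c y = True \<and> (\<forall>s\<in>{}. s < y) \<and> (\<forall>t\<in>{}. y < t)" by (rule EPD[OF eX]) auto
  then have Xne: "X \<noteq> {}" by blast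
  have "\<exists>y\<in>Y. d y = True \<and> (\<forall>s\<in>{}. s < y) \<and> (\<forall>t\<in>{}. y < t)" by (rule EPD[OF eY]) auto
  then have Yne: "Y \<noteq> {}" by blast
  note inv = bfseq_inv[OF eX eY Xne Yne]
  have step: "bfseq X Y c d n \<subseteq> bfseq X Y c d (Suc n)" for n
    using bfstep_props[OF eX eY Xne Yne, of "bfseq X Y c d n" n] inv[of n] by simp
  have mono: "m \<le> n \<Longrightarrow> bfseq X Y c d m \<subseteq> bfseq X Y c d n" for m n
    by (rule lift_Suc_mono_le[of "bfseq X Y c d", OF step])
  define F where "F = (\<Union>n. bfseq X Y c d n)"
  have FXY: "F \<subseteq> X \<times> Y" unfolding F_def using inv by blast
  have Fp: "(a < a' \<longleftrightarrow> b < b') \<and> (c a \<longleftrightarrow> d b)" if ab: "(a,b) \<in> F" "(a',b') \<in> F" for a b a' b'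
  proof -
    obtain m n where "(a,b) \<in> bfseq X Y c d m" "(a',b') \<in> bfseq X Y c d n" using ab unfolding F_def by blast
    then have "(a,b) \<in> bfseq X Y c d (max m n)" "(a',b') \<in> bfseq X Y c d (max m n)"
      using mono[of m "max m n"] mono[of n "max m n"] by auto
    then show ?thesis using inv[of "max m n"] unfolding piso_def by blast
  qed
  have dom: "\<exists>y. (x,y) \<in> F" if "x \<in> X" for x
  proof -
    obtain n where n: "from_nat_into X n = x" using from_nat_into_surj[OF cX \<open>x \<in> X\<close>] by blast
    have "\<exists>y. (from_nat_into X n, y) \<in> bfstep X Y c d n (bfseq X Y c d n)"
      using bfstep_props[OF eX eY Xne Yne, of "bfseq X Y c d n" n] inv[of n] by simp
    then show ?thesis using n unfolding F_def by (metis UN_I UNIV_I bfseq.simps(2))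
  qed
  have rng: "\<exists>x. (x,y) \<in> F" if "y \<in> Y" for y
  proof -
    obtain n where n: "from_nat_into Y n = y" using from_nat_into_surj[OF cY \<open>y \<in> Y\<close>] by blast
    have "\<exists>x. (x, from_nat_into Y n) \<in> bfstep X Y c d n (bfseq X Y c d n)"
      using bfstep_props[OF eX eY Xne Yne, of "bfseq X Y c d n" n] inv[of n] by simp
    then show ?thesis using n unfolding F_def by (metis UN_I UNIV_I bfseq.simps(2))
  qed
  have uniq: "y = y'" if "(x,y) \<in> F" "(x,y') \<in> F" for x y y'
  proof -
    have "\<not> y < y'" "\<not> y' < y" using Fp[OF that] Fp[OF that(2,1)] by auto
    then show ?thesis by auto
  qed
  define h where "h x = (SOME y. (x,y) \<in> F)" for x
  have hF: "(x, h x) \<in> F" if "x \<in> X" for x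
    unfolding h_def using dom[OF that] by (rule someI_ex)
  have ord: "\<forall>a\<in>X. \<forall>b\<in>X. a < b \<longleftrightarrow> h a < h b" using Fp hF by blast
  have col: "\<forall>a\<in>X. c a = d (h a)" using Fp hF by blast
  have inj: "inj_on h X"
  proof (rule inj_onI)
    fix a b assume "a \<in> X" "b \<in> X" "h a = h b"
    then show "a = b" using ord by (metis less_irrefl neqE)
  qed
  have "h ` X = Y"
  proof
    show "h ` X \<subseteq> Y" using hF FXY by blast
    show "Y \<subseteq> h ` X"
    proof
      fix y assume "y \<in> Y"
      then obtain x where x: "(x,y) \<in> F" using rng by blast
      then have "x \<in> X" using FXY by blast
      then have "h x = y" using uniq[OF hF x] by simp
      then show "y \<in> h ` X" using \<open>x \<in> X\<close> by blast
    qed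
  qed
  with inj ord col show ?thesis unfolding bij_betw_def by blast
qed



definition gmap :: "real \<Rightarrow> complex" where
  "gmap u = (if u \<in> \<rat> then cis u else - cis u)"

definition Dset :: "real set" where
  "Dset = {u. - (pi/2) < u \<and> u < pi/2 \<and> Arg (gmap u) \<in> \<rat>}"

lemma negcis_plus: "- cis (x + pi) = cis x"
  by (simp add: complex_eq_iff)
lemma negcis_minus: "- cis (x - pi) = cis x"
  by (simp add: complex_eq_iff)

lemma cis_minus_2pi: "cis (x - 2*pi) = cis x"
  by (simp add: complex_eq_iff cos_diff sin_diff)

lemma Arg_ratio:
  assumes "-(pi/2) < u" "u < pi/2" "-(pi/2) < v" "v < pi/2"
  shows "Arg (gmap v / gmap u) =
    (if (u \<in> \<rat> \<longleftrightarrow> v \<in> \<rat>) then v - u else if v \<le> u then v - u + pi else v - u - pi)"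
proof -
  have same: "gmap v / gmap u = cis (v - u)" if "u \<in> \<rat> \<longleftrightarrow> v \<in> \<rat>"
    using that by (auto simp: gmap_def cis_divide)
  have diff: "gmap v / gmap u = cis (v - u + pi)" if "\<not> (u \<in> \<rat> \<longleftrightarrow> v \<in> \<rat>)"
  proof -
    have "gmap v / gmap u = - (cis v / cis u)" using that by (auto simp: gmap_def)
    also have "\<dots> = - cis (v - u)" by (simp add: cis_divide)
    also have "\<dots> = cis (v - u + pi)" using negcis_minus[of "v - u + pi"] by simp
    finally show ?thesis .
  qed
  show ?thesis
  proof (cases "u \<in> \<rat> \<longleftrightarrow> v \<in> \<rat>")
    case True
    then show ?thesis using same assms by (simp add: Arg_cis)
  next
    case False
    show ?thesis
    proof (cases "v \<le> u")
      case True
      then show ?thesis using diff[OF False] False assms by (simp add: Arg_cis)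
    next
      case F2: False
      have "cis (v - u + pi) = cis (v - u - pi)" using cis_minus_2pi[of "v - u + pi"] by (simp add: algebra_simps)
      then show ?thesis using diff[OF False] False F2 assms by (simp add: Arg_cis)
    qed
  qed
qed

lemma arc_gmap:
  assumes "-(pi/2) < u" "u < pi/2" "-(pi/2) < v" "v < pi/2"
  shows "S2_arc (gmap u) (gmap v) \<longleftrightarrow>
    ((u \<in> \<rat> \<longleftrightarrow> v \<in> \<rat>) \<and> u < v) \<or> (\<not> (u \<in> \<rat> \<longleftrightarrow> v \<in> \<rat>) \<and> v < u)"
  unfolding S2_arc_def Arg_ratio[OF assms] using assms pi_gt_zero by auto

lemma gmap_inj:
  assumes "-(pi/2) < u" "u < pi/2" "-(pi/2) < v" "v < pi/2" "gmap u = gmap v"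
  shows "u = v"
proof -
  have "gmap u \<noteq> 0" by (simp add: gmap_def)
  then have "gmap v / gmap u = 1" using assms(5) by simp
  then have "Arg (gmap v / gmap u) = 0" by simp
  then show ?thesis unfolding Arg_ratio[OF assms(1-4)] using pi_gt_zero assms(1-4)
    by (auto split: if_splits)
qed

lemma pi_half_not_rat: "pi/2 \<notin> \<rat>"
proof
  assume "pi/2 \<in> \<rat>" then have "2 * (pi/2) \<in> \<rat>" by (intro Rats_mult) auto
  then show False using pi_not_rat by simp
qed

lemma gmap_bij: "bij_betw gmap Dset S2_vertices"
proof -
  have "inj_on gmap Dset" by (rule inj_onI) (auto simp: Dset_def intro: gmap_inj)
  moreover have "gmap ` Dset \<subseteq> S2_vertices"
    by (auto simp: Dset_def S2_vertices_def gmap_def)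
  moreover have "S2_vertices \<subseteq> gmap ` Dset"
  proof
    fix z assume z: "z \<in> S2_vertices"
    define t where "t = Arg z"
    have t: "t \<in> \<rat>" "cmod z = 1" using z by (auto simp: S2_vertices_def t_def)
    have zc: "z = cis t" using rcis_cmod_Arg[of z] t by (simp add: t_def rcis_def)
    have Act: "Arg (cis t) = t" by (metis zc t_def)
    have tb: "-pi < t" "t \<le> pi" using Arg_bounded[of z] by (auto simp: t_def)
    have "t \<noteq> pi/2" using t(1) pi_half_not_rat by metis
    moreover have "t \<noteq> -(pi/2)" using t(1) pi_half_not_rat by (metis Rats_minus_iff)
    ultimately consider "-(pi/2) < t \<and> t < pi/2" | "pi/2 < t" | "t < -(pi/2)" by linarith
    then show "z \<in> gmap ` Dset"
    proof cases
      case 1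
      then have "gmap t = z" "t \<in> Dset" using t zc Act by (auto simp: gmap_def Dset_def)
      then show ?thesis by (metis image_eqI)
    next
      case 2
      define u where "u = t - pi"
      have "u \<notin> \<rat>"
      proof
        assume "u \<in> \<rat>" then have "t - u \<in> \<rat>" using t by (intro Rats_diff)
        then show False using pi_not_rat by (simp add: u_def)
      qed
      then have g: "gmap u = z" using zc negcis_minus[of t] by (simp add: gmap_def u_def)
      then have "u \<in> Dset" using 2 tb t Act zc by (auto simp: Dset_def u_def)
      then show ?thesis using g by (metis image_eqI)
    next
      case 3
      define u where "u = t + pi"
      have "u \<notin> \<rat>"
      proof
        assume "u \<in> \<rat>" then have "u - t \<in> \<rat>" using t by (intro Rats_diff)
        then show False using pi_not_rat by (simp add: u_def)
      qed
      then have g: "gmap u = z" using zc negcis_plus[of t] by (simp add: gmap_def u_def)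
      then have "u \<in> Dset" using 3 tb t Act zc by (auto simp: Dset_def u_def)
      then show ?thesis using g by (metis image_eqI)
    qed
  qed
  ultimately show ?thesis unfolding bij_betw_def by blast
qed



lemma bounds_exist:
  fixes S T :: "'a::linorder set"
  assumes "finite S" "finite T" "\<forall>s\<in>S. \<forall>t\<in>T. s < t"
    and l0: "\<forall>x\<in>S \<union> T. l0 < x \<and> x < h0" "l0 < h0"
  shows "\<exists>lo hi. l0 \<le> lo \<and> hi \<le> h0 \<and> lo < hi \<and> (\<forall>s\<in>S. s \<le> lo) \<and> (\<forall>t\<in>T. hi \<le> t)"
proof -
  define lo where "lo = (if S = {} then l0 else Max S)"
  define hi where "hi = (if T = {} then h0 else Min T)"
  have MS: "S \<noteq> {} \<Longrightarrow> Max S \<in> S" using Max_in[OF assms(1)] by blast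
  have MT: "T \<noteq> {} \<Longrightarrow> Min T \<in> T" using Min_in[OF assms(2)] by blast
  have "l0 \<le> lo \<and> lo < h0"
  proof (cases "S = {}")
    case True then show ?thesis using l0(2) by (simp add: lo_def less_imp_le)
  next
    case False then have "Max S \<in> S" by (rule MS)
    then have "l0 < Max S \<and> Max S < h0" using l0(1) by blast
    then show ?thesis using False by (simp add: lo_def less_imp_le)
  qed
  moreover have "\<forall>s\<in>S. s \<le> lo" using assms(1) by (auto simp: lo_def)
  moreover have "hi \<le> h0 \<and> l0 < hi"
  proof (cases "T = {}")
    case True then show ?thesis using l0(2) by (simp add: hi_def less_imp_le)
  next
    case False then have "Min T \<in> T" by (rule MT)
    then have "l0 < Min T \<and> Min T < h0" using l0(1) by blast
    then show ?thesis using False by (simp add: hi_def less_imp_le)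
  qed
  moreover have "\<forall>t\<in>T. hi \<le> t" using assms(2) by (auto simp: hi_def)
  moreover have "lo < hi"
  proof (cases "S = {} \<or> T = {}")
    case True then show ?thesis using assms calculation by (auto simp: lo_def hi_def)
  next
    case False then show ?thesis using assms(3) MS MT by (auto simp: lo_def hi_def)
  qed
  ultimately show ?thesis by blast
qed

lemma EP_rat:
  fixes Q1 Q2 :: "rat set"
  assumes "Q1 \<inter> Q2 = {}" "dense_in_rat Q1" "dense_in_rat Q2"
  shows "EP (UNIV :: rat set) (\<lambda>q. q \<in> Q1)"
  unfolding EP_def
proof (intro allI impI)
  fix S T :: "rat set" and col :: bool
  assume fS: "finite S" and fT: "finite T" and ST: "\<forall>s\<in>S. \<forall>t\<in>T. s < t"
  have dens: "\<exists>q. (q \<in> Q1) = col \<and> a < q \<and> q < b" if ab: "a < b" for a b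
  proof (cases col)
    case True then show ?thesis using assms(2) ab unfolding dense_in_rat_def by blast
  next
    case False
    then obtain q where "q \<in> Q2" "a < q" "q < b" using assms(3) ab unfolding dense_in_rat_def by blast
    then show ?thesis using assms(1) False by blast
  qed
  define l0 where "l0 = (if S \<union> T = {} then 0 else Min (S \<union> T) - 1)"
  define h0 where "h0 = (if S \<union> T = {} then 1 else Max (S \<union> T) + 1)"
  have fU: "finite (S \<union> T)" using fS fT by simp
  have "\<forall>x\<in>S \<union> T. l0 < x \<and> x < h0"
  proof
    fix x assume x: "x \<in> S \<union> T"
    have "Min (S \<union> T) \<le> x" "x \<le> Max (S \<union> T)" using Min_le[OF fU x] Max_ge[OF fU x] by auto
    then show "l0 < x \<and> x < h0" using x by (auto simp: l0_def h0_def)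
  qed
  moreover have "l0 < h0"
  proof (cases "S \<union> T = {}")
    case False
    then obtain x where "x \<in> S \<union> T" by blast
    then have "Min (S \<union> T) \<le> Max (S \<union> T)" using fU by (meson Max_ge Min_le order.trans)
    then show ?thesis unfolding l0_def h0_def if_not_P[OF False] by linarith
  qed (simp add: l0_def h0_def)
  ultimately obtain lo hi where lh: "lo < hi" "\<forall>s\<in>S. s \<le> lo" "\<forall>t\<in>T. hi \<le> t"
    using bounds_exist[OF fS fT ST] by blast
  obtain q where "(q \<in> Q1) = col" "lo < q" "q < hi" using dens[OF lh(1)] by blast
  then show "\<exists>y\<in>UNIV. (y \<in> Q1) = col \<and> (\<forall>s\<in>S. s < y) \<and> (\<forall>t\<in>T. y < t)"
    using lh by (meson UNIV_I le_less_trans less_le_trans)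
qed

lemma irr_shift: "q \<in> \<rat> \<Longrightarrow> q + pi \<notin> \<rat>" "q \<in> \<rat> \<Longrightarrow> q - pi \<notin> \<rat>"
proof -
  assume q: "q \<in> \<rat>"
  show "q + pi \<notin> \<rat>"
  proof
    assume a: "q + pi \<in> \<rat>" have "(q + pi) - q \<in> \<rat>" by (rule Rats_diff[OF a q])
    then show False using pi_not_rat by simp
  qed
  show "q - pi \<notin> \<rat>"
  proof
    assume a: "q - pi \<in> \<rat>" have "q - (q - pi) \<in> \<rat>" by (rule Rats_diff[OF q a])
    then show False using pi_not_rat by simp
  qed
qed

lemma D_dense:
  assumes "lo < hi" "-(pi/2) \<le> lo" "hi \<le> pi/2"
  shows "\<exists>y\<in>Dset. (y \<in> \<rat>) = col \<and> lo < y \<and> y < hi"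
proof (cases col)
  case True
  obtain q where q: "q \<in> \<rat>" "lo < q" "q < hi" using Rats_dense_in_real[OF assms(1)] by blast
  then have "Arg (gmap q) = q" using assms pi_gt_zero by (simp add: gmap_def Arg_cis)
  then have "q \<in> Dset" using q assms by (simp add: Dset_def)
  then show ?thesis using q True by blast
next
  case False
  show ?thesis
  proof (cases "lo < 0")
    case True
    define m where "m = min hi 0"
    have "lo + pi < m + pi" using True assms by (simp add: m_def)
    then obtain q where q: "q \<in> \<rat>" "lo + pi < q" "q < m + pi" using Rats_dense_in_real by blast
    define y where "y = q - pi"
    have yn: "y \<notin> \<rat>" using irr_shift(2)[OF q(1)] by (simp add: y_def)
    have "gmap y = cis q" using yn negcis_minus[of q] by (simp add: gmap_def y_def)
    moreover have "Arg (cis q) = q" using q assms by (intro Arg_cis) (auto simp: m_def)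
    ultimately have "y \<in> Dset" using q assms by (auto simp: Dset_def y_def m_def)
    moreover have "lo < y" "y < hi" using q by (auto simp: y_def m_def)
    ultimately show ?thesis using yn False by blast
  next
    case F2: False
    have "lo - pi < hi - pi" using assms by simp
    then obtain q where q: "q \<in> \<rat>" "lo - pi < q" "q < hi - pi" using Rats_dense_in_real by blast
    define y where "y = q + pi"
    have yn: "y \<notin> \<rat>" using irr_shift(1)[OF q(1)] by (simp add: y_def)
    have "gmap y = cis q" using yn negcis_plus[of q] by (simp add: gmap_def y_def)
    moreover have "Arg (cis q) = q" using q assms F2 by (intro Arg_cis) auto
    ultimately have "y \<in> Dset" using q assms F2 by (auto simp: Dset_def y_def)
    moreover have "lo < y" "y < hi" using q by (auto simp: y_def)
    ultimately show ?thesis using yn False by blast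
  qed
qed

lemma EP_D: "EP Dset (\<lambda>u. u \<in> \<rat>)"
  unfolding EP_def
proof (intro allI impI)
  fix S T :: "real set" and col :: bool
  assume fS: "finite S" and fT: "finite T" and SD: "S \<subseteq> Dset" and TD: "T \<subseteq> Dset"
    and ST: "\<forall>s\<in>S. \<forall>t\<in>T. s < t"
  have "\<forall>x\<in>S \<union> T. -(pi/2) < x \<and> x < pi/2" using SD TD by (auto simp: Dset_def)
  moreover have "-(pi/2) < pi/2" by simp
  ultimately obtain lo hi where lh: "-(pi/2) \<le> lo" "hi \<le> pi/2" "lo < hi" "\<forall>s\<in>S. s \<le> lo" "\<forall>t\<in>T. hi \<le> t"
    using bounds_exist[OF fS fT ST] by blast
  obtain y where "y \<in> Dset" "(y \<in> \<rat>) = col" "lo < y" "y < hi" using D_dense[OF lh(3,1,2)] by blast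
  then show "\<exists>y\<in>Dset. (y \<in> \<rat>) = col \<and> (\<forall>s\<in>S. s < y) \<and> (\<forall>t\<in>T. y < t)"
    using lh by force
qed

lemma countable_D: "countable Dset"
proof -
  have "Dset \<subseteq> \<rat> \<union> (\<lambda>q. q - pi) ` \<rat> \<union> (\<lambda>q. q + pi) ` \<rat>"
  proof
    fix u assume u: "u \<in> Dset"
    show "u \<in> \<rat> \<union> (\<lambda>q. q - pi) ` \<rat> \<union> (\<lambda>q. q + pi) ` \<rat>"
    proof (cases "u \<in> \<rat>")
      case False
      then have A: "Arg (- cis u) \<in> \<rat>" "-(pi/2) < u" "u < pi/2" using u by (auto simp: Dset_def gmap_def)
      show ?thesis
      proof (cases "u \<le> 0")
        case True
        have "- cis u = cis (u + pi)" using negcis_minus[of "u + pi"] by simp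
        moreover have "Arg (cis (u + pi)) = u + pi" using A True by (intro Arg_cis) auto
        ultimately have "u + pi \<in> \<rat>" using A by simp
        then have "u \<in> (\<lambda>q. q - pi) ` \<rat>" by (rule rev_image_eqI) simp
        then show ?thesis by blast
      next
        case F: False
        have "- cis u = cis (u - pi)" using negcis_plus[of "u - pi"] by simp
        moreover have "Arg (cis (u - pi)) = u - pi" using A F by (intro Arg_cis) auto
        ultimately have "u - pi \<in> \<rat>" using A by simp
        then have "u \<in> (\<lambda>q. q + pi) ` \<rat>" by (rule rev_image_eqI) simp
        then show ?thesis by blast
      qed
    qed simp
  qed
  moreover have "countable (\<rat> \<union> (\<lambda>q. q - pi) ` \<rat> \<union> (\<lambda>q. q + pi) ` (\<rat> :: real set))"
    using countable_rat by auto
  ultimately show ?thesis by (rule countable_subset)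
qed

theorem lemma4:
  fixes Q1 Q2 :: "rat set"
  assumes "Q1 \<union> Q2 = UNIV" and "Q1 \<inter> Q2 = {}"
    and "dense_in_rat Q1" and "dense_in_rat Q2"
  shows "\<exists>f. digraph_iso (UNIV :: rat set) (p_arc (<) Q1 Q2) S2_vertices S2_arc f"
proof -
  obtain h where hb: "bij_betw h (UNIV :: rat set) Dset"
    and ho: "\<forall>a\<in>UNIV. \<forall>b\<in>UNIV. a < b \<longleftrightarrow> h a < h b"
    and hc: "\<forall>a\<in>UNIV. (a \<in> Q1) = (h a \<in> \<rat>)"
    using back_forth[OF countableI'[OF inj_on_id] countable_D EP_rat[OF assms(2-4)] EP_D] by blast
  have hD: "h a \<in> Dset" for a using hb bij_betwE by blast
  have "digraph_iso (UNIV :: rat set) (p_arc (<) Q1 Q2) S2_vertices S2_arc (gmap \<circ> h)"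
    unfolding digraph_iso_def
  proof (intro conjI ballI)
    show "bij_betw (gmap \<circ> h) UNIV S2_vertices" by (rule bij_betw_trans[OF hb gmap_bij])
  next
    fix a b :: rat
    have same: "((a \<in> Q1 \<and> b \<in> Q1) \<or> (a \<in> Q2 \<and> b \<in> Q2)) \<longleftrightarrow> (h a \<in> \<rat> \<longleftrightarrow> h b \<in> \<rat>)"
      using hc assms(1,2) by blast
    have bd: "-(pi/2) < h a" "h a < pi/2" "-(pi/2) < h b" "h b < pi/2"
      using hD[of a] hD[of b] by (auto simp: Dset_def)
    show "p_arc (<) Q1 Q2 a b \<longleftrightarrow> S2_arc ((gmap \<circ> h) a) ((gmap \<circ> h) b)"
      unfolding p_arc_def Let_def comp_def arc_gmap[OF bd] same using ho by blast
  qed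
  then show ?thesis by blast
qed


end
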